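(* Let $k > 0$, let $\mathcal{J} \subseteq \{1,\dots,n\}$ be nonempty, let ${\mathbf{x}}^* = k\sum_{j\in\mathcal{J}} {\mathbf{e}}_j$, and suppose there is a vector ${\mathbf{c}}$ with $$\frac{P {\mathbf{e}}_j}{\| P {\mathbf{e}}_j \|_2} \cdot {\mathbf{c}} = 1 \ \ \forall j \in \mathcal{J}, \qquad \frac{P {\mathbf{e}}_i}{\| P {\mathbf{e}}_i \|_2} \cdot {\mathbf{c}} < 1 \ \ \forall i \in \mathcal{J}^c.$$ Define $g: S \to \mathbb{R}$ by $$g(s) = \min_{0 \leq {\mathbf{x}} \leq s} \| W {\mathbf{x}} \|_1 \quad \text{subject to} \quad A {\mathbf{x}} = A {\mathbf{x}}^*.$$ Then $g$ is non-increasing in $s$, and $$g(s) > \|W{\mathbf{x}}^*\|_1 \ \text{ for } s \in [0,k)\cap S, \qquad g(s) = \|W{\mathbf{x}}^*\|_1 \ \text{ for } s \geq k.$$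
   Context: $A \in \mathbb{R}^{m\times n}$ is a matrix, $A^\dagger$ its Moore–Penrose pseudoinverse, and $P = A^\dagger A$ the orthogonal projection onto $\mathcal{N}(A)^\perp$. ${\mathbf{e}}_1,\dots,{\mathbf{e}}_n$ are the standard unit vectors, assumed not to lie in $\mathcal{N}(A)$, so $w_i := \|P{\mathbf{e}}_i\|_2 > 0$; $W = \mathrm{diag}(w_1,\dots,w_n)$. $S$ is the set of $s \ge 0$ for which there exists ${\mathbf{x}}\in\mathbb{R}^n$ with $0 \le {\mathbf{x}} \le s$ (componentwise) and $A{\mathbf{x}} = A{\mathbf{x}}^*$, i.e., the values of $s$ for which the constraint set defining $g(s)$ is nonempty. *)

theory Defs
  imports "HOL-Analysis.Analysis"
begin

definition pinv :: "real^'n^'m \<Rightarrow> real^'m^'n" where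
  "pinv A = (THE X. A ** X ** A = A \<and> X ** A ** X = X \<and>
                    transpose (A ** X) = A ** X \<and> transpose (X ** A) = X ** A)"

definition projP :: "real^'n^'m \<Rightarrow> real^'n^'n" where
  "projP A = pinv A ** A"

definition wts :: "real^'n^'m \<Rightarrow> 'n \<Rightarrow> real" where
  "wts A i = norm (projP A *v axis i 1)"

definition wl1 :: "real^'n^'m \<Rightarrow> real^'n \<Rightarrow> real" where
  "wl1 A x = (\<Sum>i\<in>UNIV. \<bar>wts A i * x $ i\<bar>)"

definition feas :: "real^'n^'m \<Rightarrow> real^'n \<Rightarrow> real \<Rightarrow> (real^'n) set" where
  "feas A xs s = {x. (\<forall>i. 0 \<le> x $ i \<and> x $ i \<le> s) \<and> A *v x = A *v xs}"

definition Sset :: "real^'n^'m \<Rightarrow> real^'n \<Rightarrow> real set" where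
  "Sset A xs = {s. 0 \<le> s \<and> feas A xs s \<noteq> {}}"

text \<open>g(s) = min of the weighted l1 norm over the feasible set (the minimum is attained
  for s in S, so it coincides with the infimum)\<close>
definition gfun :: "real^'n^'m \<Rightarrow> real^'n \<Rightarrow> real \<Rightarrow> real" where
  "gfun A xs s = Inf (wl1 A ` feas A xs s)"

end

theory Submission
  imports Defs
begin

lemma mv_axis: "((M::real^'n::finite^'m) *v axis i 1) $ j = M $ j $ i"
  by (simp add: matrix_vector_mult_def axis_def if_distrib cong: if_cong)

lemma key: "c \<bullet> ((M::real^'n::finite^'m::finite) *v x) = (\<Sum>i\<in>UNIV. x $ i * ((M *v axis i 1) \<bullet> c))"
proof -
  have "c \<bullet> (M *v x) = (\<Sum>j\<in>UNIV. c $ j * (\<Sum>i\<in>UNIV. M $ j $ i * x $ i))"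
    by (simp add: inner_vec_def matrix_vector_mult_def)
  also have "\<dots> = (\<Sum>j\<in>UNIV. \<Sum>i\<in>UNIV. x $ i * (M $ j $ i * c $ j))"
    by (simp add: sum_distrib_left mult.commute mult.left_commute)
  also have "\<dots> = (\<Sum>i\<in>UNIV. \<Sum>j\<in>UNIV. x $ i * (M $ j $ i * c $ j))"
    by (rule sum.swap)
  also have "\<dots> = (\<Sum>i\<in>UNIV. x $ i * ((M *v axis i 1) \<bullet> c))"
    by (simp add: inner_vec_def mv_axis sum_distrib_left)
  finally show ?thesis .
qed

lemma feas_compact: "compact (feas (A::real^'n::finite^'m::finite) xs s)"
proof -
  have eq: "feas A xs s = cbox 0 (\<chi> i. s) \<inter> {x. A *v x = A *v xs}"
    by (auto simp: feas_def mem_box_cart)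
  have "closed {x. A *v x = A *v xs}"
    by (intro closed_Collect_eq continuous_on_const matrix_vector_mult_linear_continuous_on)
  then show ?thesis unfolding eq by (intro compact_Int_closed compact_cbox)
qed

lemma wl1_cont: "continuous_on S (wl1 A)"
  unfolding wl1_def by (intro continuous_intros)

theorem corollary4:
  fixes A :: "real^'n::finite^'m::finite" and k :: real and J :: "'n set" and c :: "real^'n"
  assumes not_null: "\<And>i. A *v axis i 1 \<noteq> 0"
    and k_pos: "k > 0"
    and J_ne: "J \<noteq> {}"
    and cJ: "\<And>j. j \<in> J \<Longrightarrow> ((1 / norm (projP A *v axis j 1)) *\<^sub>R (projP A *v axis j 1)) \<bullet> c = 1"
    and cJc: "\<And>i. i \<notin> J \<Longrightarrow> ((1 / norm (projP A *v axis i 1)) *\<^sub>R (projP A *v axis i 1)) \<bullet> c < 1"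
  defines "xs \<equiv> (\<Sum>j\<in>J. k *\<^sub>R axis j (1::real))"
  shows "(\<forall>s\<in>Sset A xs. \<forall>t\<in>Sset A xs. s \<le> t \<longrightarrow> gfun A xs t \<le> gfun A xs s)
       \<and> (\<forall>s\<in>Sset A xs. s < k \<longrightarrow> gfun A xs s > wl1 A xs)
       \<and> (\<forall>s. k \<le> s \<longrightarrow> gfun A xs s = wl1 A xs)"
proof -
  define P where "P = projP A"
  define w where "w = wts A"
  define a where "a = (\<lambda>i. ((1 / norm (P *v axis i 1)) *\<^sub>R (P *v axis i 1)) \<bullet> c)"
  have w_nn: "w i \<ge> 0" for i by (simp add: w_def wts_def)
  have a_le: "a i \<le> 1" for i
    using cJ[of i] cJc[of i] by (cases "i \<in> J") (auto simp: a_def P_def)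
  have wa: "(P *v axis i 1) \<bullet> c = w i * a i" for i
  proof (cases "w i = 0")
    case True
    then have "P *v axis i 1 = 0" by (simp add: w_def wts_def P_def)
    then show ?thesis using True by simp
  next
    case False
    then show ?thesis by (simp add: a_def w_def wts_def P_def)
  qed
  have wJ: "w j > 0" if "j \<in> J" for j
  proof -
    have "w j \<noteq> 0"
    proof
      assume "w j = 0"
      then have "P *v axis j 1 = 0" by (simp add: w_def wts_def P_def)
      then show False using cJ[OF that] by (simp add: P_def)
    qed
    with w_nn[of j] show ?thesis by simp
  qed
  have aJ: "a j = 1" if "j \<in> J" for j using cJ[OF that] unfolding a_def P_def .
  have aJc: "a i < 1" if "i \<notin> J" for i using cJc[OF that] unfolding a_def P_def .
  define f where "f = (\<lambda>x. c \<bullet> (P *v x))"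
  have f_eq: "f x = (\<Sum>i\<in>UNIV. x $ i * (w i * a i))" for x
    unfolding f_def key wa ..
  have xs_comp: "xs $ i = (if i \<in> J then k else 0)" for i
    by (simp add: xs_def sum_component axis_def if_distrib cong: if_cong)
  have wl1_nn: "wl1 A x = (\<Sum>i\<in>UNIV. w i * x $ i)" if "\<forall>i. 0 \<le> x $ i" for x
    unfolding wl1_def w_def[symmetric] using that w_nn by (intro sum.cong) auto
  have wl1_xs: "wl1 A xs = (\<Sum>i\<in>J. k * w i)"
  proof -
    have "wl1 A xs = (\<Sum>i\<in>UNIV. if i \<in> J then k * w i else 0)"
      using k_pos by (subst wl1_nn) (auto simp: xs_comp intro!: sum.cong)
    also have "\<dots> = (\<Sum>i\<in>J. k * w i)" by (simp add: sum.If_cases)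
    finally show ?thesis .
  qed
  have f_xs: "f xs = wl1 A xs"
  proof -
    have "f xs = (\<Sum>i\<in>UNIV. if i \<in> J then k * w i else 0)"
      unfolding f_eq by (intro sum.cong) (auto simp: xs_comp aJ)
    also have "\<dots> = (\<Sum>i\<in>J. k * w i)" by (simp add: sum.If_cases)
    finally show ?thesis using wl1_xs by simp
  qed
  have f_feas: "f x = f xs" if "x \<in> feas A xs s" for x s
  proof -
    have "A *v x = A *v xs" using that by (simp add: feas_def)
    then have "P *v x = P *v xs"
      by (simp add: P_def projP_def matrix_vector_mul_assoc[symmetric])
    then show ?thesis by (simp add: f_def)
  qed
  have lower: "wl1 A x \<ge> wl1 A xs" if "x \<in> feas A xs s" for x s
  proof -
    have nn: "\<forall>i. 0 \<le> x $ i" using that by (simp add: feas_def)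
    have "wl1 A xs = f x" using f_feas[OF that] f_xs by simp
    also have "\<dots> \<le> (\<Sum>i\<in>UNIV. w i * x $ i)" unfolding f_eq
    proof (rule sum_mono)
      fix i
      have "x $ i * w i * a i \<le> x $ i * w i * 1"
        using nn w_nn[of i] a_le[of i] by (intro mult_left_mono) auto
      then show "x $ i * (w i * a i) \<le> w i * x $ i" by (simp add: algebra_simps)
    qed
    finally show ?thesis using wl1_nn[OF nn] by simp
  qed
  have bdd: "bdd_below (wl1 A ` feas A xs s)" for s
    using lower by (auto intro!: bdd_belowI[where m="wl1 A xs"])
  have part1: "\<forall>s\<in>Sset A xs. \<forall>t\<in>Sset A xs. s \<le> t \<longrightarrow> gfun A xs t \<le> gfun A xs s"
  proof (intro ballI impI)
    fix s t assume s: "s \<in> Sset A xs" and t: "t \<in> Sset A xs" and st: "s \<le> t"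
    have "feas A xs s \<subseteq> feas A xs t" using st by (auto simp: feas_def intro: order_trans)
    moreover have "feas A xs s \<noteq> {}" using s by (simp add: Sset_def)
    ultimately show "gfun A xs t \<le> gfun A xs s"
      unfolding gfun_def by (intro cInf_superset_mono bdd) auto
  qed
  have part3: "\<forall>s. k \<le> s \<longrightarrow> gfun A xs s = wl1 A xs"
  proof (intro allI impI)
    fix s assume ks: "k \<le> s"
    have "xs \<in> feas A xs s" using ks k_pos by (auto simp: feas_def xs_comp)
    then show "gfun A xs s = wl1 A xs"
      unfolding gfun_def using lower by (intro cInf_eq_minimum) auto
  qed
  have part2: "\<forall>s\<in>Sset A xs. s < k \<longrightarrow> gfun A xs s > wl1 A xs"
  proof (intro ballI impI)
    fix s assume s: "s \<in> Sset A xs" and sk: "s < k"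
    have ne: "feas A xs s \<noteq> {}" using s by (simp add: Sset_def)
    obtain x0 where x0: "x0 \<in> feas A xs s" and min: "\<forall>y\<in>feas A xs s. wl1 A x0 \<le> wl1 A y"
      using continuous_attains_inf[OF feas_compact ne wl1_cont] by blast
    have g: "gfun A xs s = wl1 A x0"
      unfolding gfun_def using x0 min by (intro cInf_eq_minimum) auto
    have nn: "\<forall>i. 0 \<le> x0 $ i" and ub: "\<forall>i. x0 $ i \<le> s" using x0 by (auto simp: feas_def)
    show "gfun A xs s > wl1 A xs"
    proof (rule ccontr)
      assume "\<not> ?thesis"
      then have le: "wl1 A x0 \<le> wl1 A xs" using g by simp
      have diff: "wl1 A x0 - f x0 = (\<Sum>i\<in>UNIV. x0 $ i * w i * (1 - a i))"
        unfolding wl1_nn[OF nn] f_eq sum_subtractf[symmetric]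
        by (intro sum.cong) (auto simp: algebra_simps)
      have tnn: "\<forall>i\<in>UNIV. 0 \<le> x0 $ i * w i * (1 - a i)"
        using nn w_nn a_le by auto
      have "wl1 A x0 - f x0 \<le> 0" using le f_feas[OF x0] f_xs by simp
      then have "(\<Sum>i\<in>UNIV. x0 $ i * w i * (1 - a i)) = 0"
        using diff tnn by (simp add: sum_nonneg antisym)
      then have z: "x0 $ i * w i * (1 - a i) = 0" for i
        using tnn by (simp add: sum_nonneg_eq_0_iff)
      have "f x0 = (\<Sum>i\<in>UNIV. if i \<in> J then x0 $ i * w i else 0)"
        unfolding f_eq
      proof (intro sum.cong refl)
        fix i
        show "x0 $ i * (w i * a i) = (if i \<in> J then x0 $ i * w i else 0)"
        proof (cases "i \<in> J")
          case True then show ?thesis by (simp add: aJ)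
        next
          case False
          then have "x0 $ i * w i = 0" using z[of i] aJc[OF False] by simp
          then show ?thesis using False by (simp add: mult.assoc[symmetric])
        qed
      qed
      also have "\<dots> = (\<Sum>i\<in>J. x0 $ i * w i)" by (simp add: sum.If_cases)
      also have "\<dots> \<le> (\<Sum>i\<in>J. s * w i)"
        using ub w_nn by (intro sum_mono mult_right_mono) auto
      also have "\<dots> < (\<Sum>i\<in>J. k * w i)"
        using J_ne wJ sk by (intro sum_strict_mono) auto
      finally have "f x0 < wl1 A xs" using wl1_xs by simp
      then show False using f_feas[OF x0] f_xs by simp
    qed
  qed
  show ?thesis using part1 part2 part3 by blast
qed

end
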